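(* Let $\tau$ be a decorated ideal triangulation of $S$ with underlying ideal triangulation $\lambda$, and let $\tau'$ be obtained from $\tau$ by a reindexing, a mark rotation or a diagonal exchange, with underlying ideal triangulation $\lambda'$. For every exponential Kashaev coordinate vector $(y_1,z_1,\dots,y_{2m},z_{2m})\in\mathbb R_{>0}^{4m}$ of $\tau$, let $(y',z')$ be its Kashaev coordinate change to $\tau'$, let $x=F_\tau(y,z)$ and $x'=F_{\tau'}(y',z')$. Then $x'$ is the shear coordinate change of $x$ from $\lambda$ to $\lambda'$: $x'=x$ if $\tau'$ is obtained by a reindexing or a mark rotation, and $x'$ is given by the diagonal exchange formulas in the context if $\tau'=\varphi_{\mu\nu}(\tau)$.
   Context: Let $\bar S$ be a closed oriented surface of genus $g$, $S=\bar S\setminus\{v_1,\dots,v_p\}$, $p\ge1$, $m:=2g-2+p>0$. An ideal triangulation has $3m$ edges and $2m$ triangles (triangulation of $\bar S$ with vertex set $\{v_1,\dots,v_p\}$; two sides of a triangle may lie on the same edge). A decorated ideal triangulation $\tau$ has triangles numbered $\tau_1,\dots,\tau_{2m}$ and a marked corner in each; forgetting numbering and marks gives its underlying ideal triangulation $\lambda$, whose edges are indexed $\lambda_1,\dots,\lambda_{3m}$. Sides of $\tau_\mu$ are numbered $0,1,2$ counterclockwise, the $0$-side opposite the marked corner. Moves: reindexing $\alpha(\tau)$ ($k$-th triangle is $\tau_{\alpha(k)}$); mark rotation $\rho_i$ (mark of $\tau_i$ moves to the next corner counterclockwise); diagonal exchange $\varphi_{\mu\nu}$, applicable when distinct $\tau_\mu,\tau_\nu$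 share an edge which is the $0$-side of both: write the quadrilateral $\tau_\mu\cup\tau_\nu$ with corners $P,Q,R,T$ in counterclockwise order, $\tau_\mu=TPQ$ marked at $P$, $\tau_\nu=QRT$ marked at $R$, common edge $\lambda_i=QT$, and $\lambda_j=TP$, $\lambda_k=RT$, $\lambda_l=QR$, $\lambda_m=PQ$ (some of $\lambda_j,\lambda_k,\lambda_l,\lambda_m$ may coincide); $\varphi_{\mu\nu}(\tau)$ replaces $QT$ by $PR$, with new $\mu$-th triangle $RTP$ marked at $T$ and new $\nu$-th triangle $PQR$ marked at $Q$, others unchanged; $\lambda'$ has edges $\lambda'_h=\lambda_h$ for $h\ne i$ and $\lambda'_i=PR$. For reindexings and mark rotations $\lambda'=\lambda$ with the same edge indexing. Kashaev coordinate change (exponential coordinates): reindexing: $(y'_k,z'_k)=(y_{\alpha(k)},z_{\alpha(k)})$; mark rotation $\rho_i$: $(y'_i,z'_i)=(z_i/y_i,1/y_i)$, others unchanged; diagonal exchange $\varphi_{\mu\nu}$: $y'_\mu=z_\nu/D$, $z'_\mu=y_\mu/D$, $y'_\nu=z_\mu/D$, $z'_\nu=y_\nu/D$ with $D=y_\mu y_\nu+z_\mu z_\nu$, others unchanged. The map $F_\tau:\mathbb R_{>0}^{4m}\to\mathbb R_{>0}^{3m}$: set $h^0_\mu=y_\mu/z_\mu$, $h^1_\mu=z_\mu$, $h^2_\mu=1/y_\mu$ and $x_h=h^s_\mu h^t_\nu$ whenever $\lambda_h$ bounds the $s$-side of $\tau_\mu$ and the $t$-side of $\tau_\nu$. Shear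 coordinate change for the diagonal exchange at $\lambda_i$: $x'_h=x_h$ for $h\notin\{i,j,k,l,m\}$, $x'_i=x_i^{-1}$, and: Case 1 ($\lambda_j,\lambda_k,\lambda_l,\lambda_m$ distinct): $x'_j=(1+x_i)x_j$, $x'_k=(1+x_i^{-1})^{-1}x_k$, $x'_l=(1+x_i)x_l$, $x'_m=(1+x_i^{-1})^{-1}x_m$; Case 2 ($\lambda_j=\lambda_k$, $\lambda_l\ne\lambda_m$): $x'_j=x_ix_j$, $x'_l=(1+x_i)x_l$, $x'_m=(1+x_i^{-1})^{-1}x_m$; Case 3 ($\lambda_j=\lambda_m$, $\lambda_k\neq\lambda_l$): $x'_j=x_ix_j$, $x'_k=(1+x_i^{-1})^{-1}x_k$, $x'_l=(1+x_i)x_l$; Case 4 ($\lambda_j=\lambda_l$, $\lambda_k\ne\lambda_m$): $x'_j=(1+x_i)^2x_j$, $x'_k=(1+x_i^{-1})^{-1}x_k$, $x'_m=(1+x_i^{-1})^{-1}x_m$; Case 5 ($\lambda_k=\lambda_m$, $\lambda_j\ne\lambda_l$): $x'_j=(1+x_i)x_j$, $x'_k=(1+x_i^{-1})^{-2}x_k$, $x'_l=(1+x_i)x_l$; Case 6 ($\lambda_j=\lambda_k$ and $\lambda_l=\lambda_m$): $x'_j=x_ix_j$, $x'_l=x_ix_l$; Case 7 ($\lambda_j=\lambda_m$ and $\lambda_k=\lambda_l$): $x'_j=x_ix_j$, $x'_k=x_ix_k$; Case 8 ($\lambda_j=\lambda_l$ and $\lambda_k=\lambda_m$): $x'_j=(1+x_i)^2x_j$,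 $x'_k=(1+x_i^{-1})^{-2}x_k$. *)

theory Defs
  imports Complex_Main
begin

text \<open>A decorated ideal triangulation with
  parameter m has triangles 0..2m-1 and edges 0..3m-1; it is given by the side map
  e, where e mu s is the index of the edge of the underlying ideal triangulation
  carrying the s-side of triangle mu (sides numbered 0,1,2 counterclockwise,
  the 0-side opposite the marked corner).  Gluing oriented triangles along a perfect
  pairing of their sides yields a closed oriented surface; connectedness of the
  gluing makes it a single surface whose punctures are the vertices.\<close>

definition tri_adj :: "nat \<Rightarrow> (nat \<Rightarrow> nat \<Rightarrow> nat) \<Rightarrow> (nat \<times> nat) set" where
  "tri_adj m e = {(mu, nu). mu < 2*m \<and> nu < 2*m \<and>
      (\<exists>s t. s < 3 \<and> t < 3 \<and> e mu s = e nu t)}"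

definition sides_of_edge :: "nat \<Rightarrow> (nat \<Rightarrow> nat \<Rightarrow> nat) \<Rightarrow> nat \<Rightarrow> (nat \<times> nat) set" where
  "sides_of_edge m e h = {(mu, s). mu < 2*m \<and> s < 3 \<and> e mu s = h}"

definition decorated_ideal_triangulation :: "nat \<Rightarrow> (nat \<Rightarrow> nat \<Rightarrow> nat) \<Rightarrow> bool" where
  "decorated_ideal_triangulation m e \<longleftrightarrow>
     0 < m \<and>
     (\<forall>mu < 2*m. \<forall>s < 3. e mu s < 3*m) \<and>
     (\<forall>h < 3*m. card (sides_of_edge m e h) = 2) \<and>
     (\<forall>mu < 2*m. \<forall>nu < 2*m. (mu, nu) \<in> (tri_adj m e)\<^sup>*)"

datatype move = Reindex "nat \<Rightarrow> nat" | Rotate nat | Exchange nat nat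

fun move_applicable :: "nat \<Rightarrow> (nat \<Rightarrow> nat \<Rightarrow> nat) \<Rightarrow> move \<Rightarrow> bool" where
  "move_applicable m e (Reindex alpha) = bij_betw alpha {..<2*m} {..<2*m}"
| "move_applicable m e (Rotate i) = (i < 2*m)"
| "move_applicable m e (Exchange mu nu) =
     (mu < 2*m \<and> nu < 2*m \<and> mu \<noteq> nu \<and> e mu 0 = e nu 0)"

text \<open>For the exchange: with
  i = e mu 0 = e nu 0 (QT), j = e mu 1 (TP), m' = e mu 2 (PQ), l = e nu 1 (QR),
  k = e nu 2 (RT); new mu = RTP marked at T has sides (PR, RT, TP) = (i, k, j),
  new nu = PQR marked at Q has sides (RP, PQ, QR) = (i, m', l).\<close>

fun move_tri :: "move \<Rightarrow> (nat \<Rightarrow> nat \<Rightarrow> nat) \<Rightarrow> (nat \<Rightarrow> nat \<Rightarrow> nat)" where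
  "move_tri (Reindex alpha) e = (\<lambda>k. e (alpha k))"
| "move_tri (Rotate i) e = e(i := (\<lambda>s. e i ((s + 1) mod 3)))"
| "move_tri (Exchange mu nu) e =
     e(mu := (\<lambda>s. if s = 0 then e mu 0 else if s = 1 then e nu 2 else e mu 1),
       nu := (\<lambda>s. if s = 0 then e nu 0 else if s = 1 then e mu 2 else e nu 1))"

fun kashaev_change :: "move \<Rightarrow> (nat \<Rightarrow> real) \<times> (nat \<Rightarrow> real) \<Rightarrow> (nat \<Rightarrow> real) \<times> (nat \<Rightarrow> real)" where
  "kashaev_change (Reindex alpha) (y, z) = ((\<lambda>k. y (alpha k)), (\<lambda>k. z (alpha k)))"
| "kashaev_change (Rotate i) (y, z) = (y(i := z i / y i), z(i := 1 / y i))"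
| "kashaev_change (Exchange mu nu) (y, z) =
     (let D = y mu * y nu + z mu * z nu in
      (y(mu := z nu / D, nu := z mu / D), z(mu := y mu / D, nu := y nu / D)))"

definition hcoord :: "(nat \<Rightarrow> real) \<Rightarrow> (nat \<Rightarrow> real) \<Rightarrow> nat \<Rightarrow> nat \<Rightarrow> real" where
  "hcoord y z mu s = (if s = 0 then y mu / z mu else if s = 1 then z mu else 1 / y mu)"

definition F_map :: "nat \<Rightarrow> (nat \<Rightarrow> nat \<Rightarrow> nat) \<Rightarrow> (nat \<Rightarrow> real) \<Rightarrow> (nat \<Rightarrow> real) \<Rightarrow> nat \<Rightarrow> real" where
  "F_map m e y z h = (\<Prod>(mu, s) \<in> sides_of_edge m e h. hcoord y z mu s)"

text \<open>Shear coordinate change for the diagonal exchange at edge i, with the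
  surrounding edges j (TP), k (RT), l (QR), mm (PQ).  Cases 1--8 as in the paper;
  the two remaining configurations (l = mm alone, k = l alone) are the mirror images
  of cases 2 and 3 (obtained by exchanging the roles of the two triangles).\<close>

definition shear_flip :: "nat \<Rightarrow> nat \<Rightarrow> nat \<Rightarrow> nat \<Rightarrow> nat \<Rightarrow> (nat \<Rightarrow> real) \<Rightarrow> nat \<Rightarrow> real" where
  "shear_flip i j k l mm x h =
    (let a = (1 + x i); b = inverse (1 + inverse (x i)) in
     if h = i then inverse (x i)
     else if distinct [j, k, l, mm] then
       (if h = j then a * x j else if h = k then b * x k
        else if h = l then a * x l else if h = mm then b * x mm else x h)
     else if j = k \<and> l = mm then
       (if h = j then x i * x j else if h = l then x i * x l else x h)
     else if j = mm \<and> k = l then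
       (if h = j then x i * x j else if h = k then x i * x k else x h)
     else if j = l \<and> k = mm then
       (if h = j then a^2 * x j else if h = k then b^2 * x k else x h)
     else if j = k then
       (if h = j then x i * x j else if h = l then a * x l else if h = mm then b * x mm else x h)
     else if j = mm then
       (if h = j then x i * x j else if h = k then b * x k else if h = l then a * x l else x h)
     else if j = l then
       (if h = j then a^2 * x j else if h = k then b * x k else if h = mm then b * x mm else x h)
     else if k = mm then
       (if h = j then a * x j else if h = k then b^2 * x k else if h = l then a * x l else x h)
     else if l = mm then
       (if h = l then x i * x l else if h = j then a * x j else if h = k then b * x k else x h)
     else if k = l then
       (if h = k then x i * x k else if h = j then a * x j else if h = mm then b * x mm else x h)
     else x h)"

fun shear_change :: "(nat \<Rightarrow> nat \<Rightarrow> nat) \<Rightarrow> move \<Rightarrow> (nat \<Rightarrow> real) \<Rightarrow> (nat \<Rightarrow> real)" where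
  "shear_change e (Reindex alpha) x = x"
| "shear_change e (Rotate i) x = x"
| "shear_change e (Exchange mu nu) x =
     shear_flip (e mu 0) (e mu 1) (e nu 2) (e nu 1) (e mu 2) x"

end

theory Submission imports Defs begin

lemma sides_finite: "finite (sides_of_edge m e h)"
  by (rule finite_subset[of _ "{..<2*m} \<times> {..<3}"]) (auto simp: sides_of_edge_def)

lemma sides_no3:
  assumes "decorated_ideal_triangulation m e" "h < 3*m"
    "p \<in> sides_of_edge m e h" "q \<in> sides_of_edge m e h" "r \<in> sides_of_edge m e h"
    "p \<noteq> q" "p \<noteq> r" "q \<noteq> r"
  shows False
proof -
  have "card {p,q,r} \<le> card (sides_of_edge m e h)"
    using assms by (intro card_mono sides_finite) auto
  moreover have "card (sides_of_edge m e h) = 2"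
    using assms unfolding decorated_ideal_triangulation_def by auto
  ultimately show False using assms by auto
qed

lemma sides_two:
  assumes "decorated_ideal_triangulation m e" "h < 3*m"
    "p \<in> sides_of_edge m e h" "q \<in> sides_of_edge m e h" "p \<noteq> q"
  shows "sides_of_edge m e h = {p,q}"
  using sides_no3[OF assms(1,2,3,4)] assms(3,4,5) by blast

lemma reindex_case:
  assumes "bij_betw alpha {..<2*m} {..<2*m}"
  shows "F_map m (move_tri (Reindex alpha) e) (fst (kashaev_change (Reindex alpha) (y, z)))
          (snd (kashaev_change (Reindex alpha) (y, z))) h = F_map m e y z h"
proof -
  let ?ai = "inv_into {..<2*m} alpha"
  have 1: "\<And>k. k < 2*m \<Longrightarrow> alpha k < 2*m" using assms bij_betwE by blast
  have 2: "\<And>k. k < 2*m \<Longrightarrow> ?ai k < 2*m"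
    using assms bij_betwE bij_betw_inv_into by blast
  have 3: "\<And>k. k < 2*m \<Longrightarrow> alpha (?ai k) = k"
    using assms bij_betw_inv_into_right by fastforce
  have 4: "\<And>k. k < 2*m \<Longrightarrow> ?ai (alpha k) = k"
    using assms bij_betw_inv_into_left by fastforce
  show ?thesis unfolding F_map_def
    apply (rule prod.reindex_bij_witness[where j = "\<lambda>(k,s). (alpha k, s)"
                and i = "\<lambda>(k,s). (?ai k, s)"])
    using 1 2 3 4 by (auto simp: sides_of_edge_def hcoord_def)
qed

lemma less3: "(s::nat) < 3 \<Longrightarrow> s = 0 \<or> s = 1 \<or> s = 2" by auto

lemma rot_e: "move_tri (Rotate i) e i 0 = e i (Suc 0)" "move_tri (Rotate i) e i (Suc 0) = e i 2"
  "move_tri (Rotate i) e i 2 = e i 0" "r \<noteq> i \<Longrightarrow> move_tri (Rotate i) e r = e r"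
  by (simp_all add: numeral_2_eq_2)

lemma rotate_case:
  assumes "i < 2*m" "0 < y i" "0 < z i"
  shows "F_map m (move_tri (Rotate i) e) (fst (kashaev_change (Rotate i) (y, z)))
          (snd (kashaev_change (Rotate i) (y, z))) h = F_map m e y z h"
  unfolding F_map_def
  apply (rule prod.reindex_bij_witness[where j = "\<lambda>(r,s). if r = i then (r, if s=0 then 1 else if s=1 then 2 else 0) else (r,s)"
                and i = "\<lambda>(r,s). if r = i then (r, if s=0 then 2 else if s=1 then 0 else 1) else (r,s)"])
  subgoal for a by (cases a) (auto simp: sides_of_edge_def dest!: less3)
  subgoal for a by (cases a, clarsimp simp: sides_of_edge_def simp del: move_tri.simps, (drule less3, (elim disjE; simp add: rot_e del: move_tri.simps))?)
  subgoal for a by (cases a, clarsimp simp: sides_of_edge_def simp del: move_tri.simps, (drule less3, (elim disjE; simp add: rot_e del: move_tri.simps))?)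
  subgoal for a by (cases a, clarsimp simp: sides_of_edge_def simp del: move_tri.simps, (drule less3, (elim disjE; simp add: rot_e del: move_tri.simps))?)
  subgoal for a
  proof -
    assume "a \<in> sides_of_edge m (move_tri (Rotate i) e) h"
    then obtain r s where a: "a = (r,s)" "s < 3" by (auto simp: sides_of_edge_def)
    have yz: "y i \<noteq> 0" "z i \<noteq> 0" using assms by auto
    from less3[OF a(2)] show ?thesis
      by (cases "r = i") (auto simp: a hcoord_def yz)
  qed
  done
lemma flip_alg:
  fixes x :: "nat \<Rightarrow> real"
  assumes "x i > 0" "h \<noteq> i"
    "\<not>(h=j\<and>h=k\<and>h=l)" "\<not>(h=j\<and>h=k\<and>h=mm)" "\<not>(h=j\<and>h=l\<and>h=mm)" "\<not>(h=k\<and>h=l\<and>h=mm)"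
  shows "x h * ((if h=j then 1 + x i else 1)*(if h=k then inverse (1 + inverse (x i)) else 1)
          *(if h=l then 1 + x i else 1)*(if h=mm then inverse (1 + inverse (x i)) else 1))
         = shear_flip i j k l mm x h"
proof -
  have ab: "(1 + x i) * inverse (1 + inverse (x i)) = x i"
    using assms(1) by (simp add: field_simps)
  show ?thesis using assms ab unfolding shear_flip_def Let_def
    by (cases "h=j"; cases "h=k"; cases "h=l"; cases "h=mm"; simp add: power2_eq_square algebra_simps)
qed

lemma ex_e:
  assumes "mu \<noteq> nu"
  shows "move_tri (Exchange mu nu) e mu 0 = e mu 0"
    "move_tri (Exchange mu nu) e mu (Suc 0) = e nu 2"
    "move_tri (Exchange mu nu) e mu 2 = e mu (Suc 0)"
    "move_tri (Exchange mu nu) e nu 0 = e nu 0"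
    "move_tri (Exchange mu nu) e nu (Suc 0) = e mu 2"
    "move_tri (Exchange mu nu) e nu 2 = e nu (Suc 0)"
    "r \<noteq> mu \<Longrightarrow> r \<noteq> nu \<Longrightarrow> move_tri (Exchange mu nu) e r = e r"
  using assms by auto

lemma nt_lemma:
  assumes dec: "decorated_ideal_triangulation m e" and h: "h < 3*m" and mu: "mu < 2*m" and nu: "nu < 2*m"
    and mn: "mu \<noteq> nu"
  shows "\<not>(h = e mu 1 \<and> h = e nu 2 \<and> h = e nu 1)" "\<not>(h = e mu 1 \<and> h = e nu 2 \<and> h = e mu 2)"
      "\<not>(h = e mu 1 \<and> h = e nu 1 \<and> h = e mu 2)" "\<not>(h = e nu 2 \<and> h = e nu 1 \<and> h = e mu 2)"
proof -
  have inS: "\<And>r s. r < 2*m \<Longrightarrow> s < 3 \<Longrightarrow> h = e r s \<Longrightarrow> (r,s) \<in> sides_of_edge m e h"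
    by (simp add: sides_of_edge_def)
  show "\<not>(h = e mu 1 \<and> h = e nu 2 \<and> h = e nu 1)"
  proof
    assume H: "h = e mu 1 \<and> h = e nu 2 \<and> h = e nu 1"
    show False
      by (rule sides_no3[OF dec h inS[OF mu _ conjunct1[OF H]] inS[OF nu _ conjunct1[OF conjunct2[OF H]]]
        inS[OF nu _ conjunct2[OF conjunct2[OF H]]]]) (use mn in simp_all)
  qed
  show "\<not>(h = e mu 1 \<and> h = e nu 2 \<and> h = e mu 2)"
  proof
    assume H: "h = e mu 1 \<and> h = e nu 2 \<and> h = e mu 2"
    show False
      by (rule sides_no3[OF dec h inS[OF mu _ conjunct1[OF H]] inS[OF nu _ conjunct1[OF conjunct2[OF H]]]
        inS[OF mu _ conjunct2[OF conjunct2[OF H]]]]) (use mn in simp_all)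
  qed
  show "\<not>(h = e mu 1 \<and> h = e nu 1 \<and> h = e mu 2)"
  proof
    assume H: "h = e mu 1 \<and> h = e nu 1 \<and> h = e mu 2"
    show False
      by (rule sides_no3[OF dec h inS[OF mu _ conjunct1[OF H]] inS[OF nu _ conjunct1[OF conjunct2[OF H]]]
        inS[OF mu _ conjunct2[OF conjunct2[OF H]]]]) (use mn in simp_all)
  qed
  show "\<not>(h = e nu 2 \<and> h = e nu 1 \<and> h = e mu 2)"
  proof
    assume H: "h = e nu 2 \<and> h = e nu 1 \<and> h = e mu 2"
    show False
      by (rule sides_no3[OF dec h inS[OF nu _ conjunct1[OF H]] inS[OF nu _ conjunct1[OF conjunct2[OF H]]]
        inS[OF mu _ conjunct2[OF conjunct2[OF H]]]]) (use mn in simp_all)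
  qed
qed

lemma exchange_case:
  assumes dec: "decorated_ideal_triangulation m e"
    and mu: "mu < 2*m" and nu: "nu < 2*m" and mn: "mu \<noteq> nu" and i0: "e mu 0 = e nu 0"
    and pos: "\<forall>r < 2*m. 0 < y r \<and> 0 < z r" and h: "h < 3*m"
  shows "F_map m (move_tri (Exchange mu nu) e) (fst (kashaev_change (Exchange mu nu) (y, z)))
          (snd (kashaev_change (Exchange mu nu) (y, z))) h
         = shear_flip (e mu 0) (e mu 1) (e nu 2) (e nu 1) (e mu 2) (F_map m e y z) h"
proof -
  define D where "D = y mu * y nu + z mu * z nu"
  define y' where "y' = y(mu := z nu / D, nu := z mu / D)"
  define z' where "z' = z(mu := y mu / D, nu := y nu / D)"
  define e' where "e' = move_tri (Exchange mu nu) e"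
  have kc: "kashaev_change (Exchange mu nu) (y, z) = (y', z')"
    by (simp add: Let_def y'_def z'_def D_def)
  have p: "0 < y mu" "0 < y nu" "0 < z mu" "0 < z nu" using pos mu nu by auto
  have Dp: "0 < D" using p unfolding D_def by (intro add_pos_pos mult_pos_pos)
  define A where "A = D / (z mu * z nu)"
  define B where "B = y mu * y nu / D"
  define C0 where "C0 = z mu * z nu / (y mu)^2"
  define C1 where "C1 = z mu * z nu / (y nu)^2"
  define R where "R = (\<lambda>p::nat\<times>nat. (if p = (mu,0) then C0 else 1) * (if p = (nu,0) then C1 else 1)
     * (if p = (mu,1) then A else 1) * (if p = (nu,1) then A else 1)
     * (if p = (mu,2) then B else 1) * (if p = (nu,2) then B else 1))"
  define sg where "sg = (\<lambda>(r::nat,s::nat). if r = mu \<and> s = 1 then (mu,2) else if r = mu \<and> s = 2 then (nu,1)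
     else if r = nu \<and> s = 2 then (mu,1) else if r = nu \<and> s = 1 then (nu,2) else (r,s))"
  define sgi where "sgi = (\<lambda>(r::nat,s::nat). if r = mu \<and> s = 2 then (mu,1) else if r = nu \<and> s = 1 then (mu,2)
     else if r = mu \<and> s = 1 then (nu,2) else if r = nu \<and> s = 2 then (nu,1) else (r,s))"
  note ee = ex_e[OF mn, where e = e, folded e'_def]
  have main: "(\<Prod>p \<in> sides_of_edge m e h. hcoord y z (fst p) (snd p) * R p)
     = (\<Prod>p \<in> sides_of_edge m e' h. hcoord y' z' (fst p) (snd p))"
  proof (rule prod.reindex_bij_witness[where j = sg and i = sgi])
    fix a assume "a \<in> sides_of_edge m e h"
    then obtain r s where a: "a = (r,s)" "s < 3" "r < 2*m" "e r s = h" by (auto simp: sides_of_edge_def)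
    show "sgi (sg a) = a" using less3[OF a(2)] mn by (auto simp: a sg_def sgi_def)
    show "sg a \<in> sides_of_edge m e' h" using less3[OF a(2)] mn mu nu a
      by (cases "r = mu"; cases "r = nu") (auto simp: sg_def sides_of_edge_def ee i0)
    show "hcoord y' z' (fst (sg a)) (snd (sg a)) = hcoord y z (fst a) (snd a) * R a"
      using less3[OF a(2)] mn p Dp
      by (cases "r = mu"; cases "r = nu")
         (auto simp: a sg_def R_def hcoord_def y'_def z'_def A_def B_def C0_def C1_def field_simps power2_eq_square)
  next
    fix b assume "b \<in> sides_of_edge m e' h"
    then obtain r s where b: "b = (r,s)" "s < 3" "r < 2*m" "e' r s = h" by (auto simp: sides_of_edge_def)
    show "sg (sgi b) = b" using less3[OF b(2)] mn by (auto simp: b sg_def sgi_def)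
    show "sgi b \<in> sides_of_edge m e h" using less3[OF b(2)] mn mu nu b
      by (cases "r = mu"; cases "r = nu") (auto simp: sgi_def sides_of_edge_def ee i0)
  qed
  have mem: "\<And>r s. r < 2*m \<Longrightarrow> s < 3 \<Longrightarrow> (r,s) \<in> sides_of_edge m e h \<longleftrightarrow> h = e r s"
    by (auto simp add: sides_of_edge_def)
  have F': "F_map m e' y' z' h = F_map m e y z h * (\<Prod>p \<in> sides_of_edge m e h. R p)"
    unfolding F_map_def using main[symmetric] by (simp add: prod.distrib split_def)
  have PR: "(\<Prod>p \<in> sides_of_edge m e h. R p) =
     (if h = e mu 0 then C0 else 1) * (if h = e nu 0 then C1 else 1) * (if h = e mu 1 then A else 1)
     * (if h = e nu 1 then A else 1) * (if h = e mu 2 then B else 1) * (if h = e nu 2 then B else 1)"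
    unfolding R_def by (simp add: prod.distrib sides_finite mem mu nu)
  have no3: "\<And>p q r. p \<in> sides_of_edge m e h \<Longrightarrow> q \<in> sides_of_edge m e h \<Longrightarrow> r \<in> sides_of_edge m e h
      \<Longrightarrow> p \<noteq> q \<Longrightarrow> p \<noteq> r \<Longrightarrow> q \<noteq> r \<Longrightarrow> False"
    using sides_no3[OF dec h] by blast
  define i where "i = e mu 0"
  have i3: "i < 3*m" using dec mu unfolding decorated_ideal_triangulation_def i_def by auto
  have Si: "sides_of_edge m e i = {(mu,0),(nu,0)}"
    by (rule sides_two[OF dec i3]) (auto simp: sides_of_edge_def mu nu i_def i0 mn)
  have xi: "F_map m e y z i = (y mu / z mu) * (y nu / z nu)"
    unfolding F_map_def Si using mn by (simp add: hcoord_def)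
  have xip: "F_map m e y z i > 0" unfolding xi using p by simp
  have kc': "fst (kashaev_change (Exchange mu nu) (y, z)) = y'" "snd (kashaev_change (Exchange mu nu) (y, z)) = z'"
    using kc by auto
  show ?thesis
  proof (cases "h = i")
    case True
    have "e mu 1 \<noteq> h" "e nu 1 \<noteq> h" "e mu 2 \<noteq> h" "e nu 2 \<noteq> h"
      using no3[of "(mu,0)" "(nu,0)" "(mu,1)"] no3[of "(mu,0)" "(nu,0)" "(nu,1)"]
        no3[of "(mu,0)" "(nu,0)" "(mu,2)"] no3[of "(mu,0)" "(nu,0)" "(nu,2)"]
      using True mn mu nu by (auto simp: sides_of_edge_def i_def i0)
    then have "F_map m e' y' z' h = F_map m e y z i * C0 * C1"
      using True F' PR by (simp add: i_def i0)
    also have "\<dots> = inverse (F_map m e y z i)"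
      unfolding xi C0_def C1_def using p by (simp add: field_simps power2_eq_square)
    also have "\<dots> = shear_flip i (e mu 1) (e nu 2) (e nu 1) (e mu 2) (F_map m e y z) h"
      using True by (simp add: shear_flip_def)
    finally show ?thesis unfolding kc' e'_def[symmetric] i_def[symmetric] .
  next
    case False
    have Ax: "A = 1 + F_map m e y z i" unfolding A_def xi D_def using p by (simp add: field_simps)
    have Bx: "B = inverse (1 + inverse (F_map m e y z i))" unfolding B_def xi D_def using p
      by (simp add: field_simps)
    have nt: "\<not>(h = e mu 1 \<and> h = e nu 2 \<and> h = e nu 1)" "\<not>(h = e mu 1 \<and> h = e nu 2 \<and> h = e mu 2)"
      "\<not>(h = e mu 1 \<and> h = e nu 1 \<and> h = e mu 2)" "\<not>(h = e nu 2 \<and> h = e nu 1 \<and> h = e mu 2)"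
      using nt_lemma[OF dec h mu nu mn] .
    have "F_map m e' y' z' h = F_map m e y z h *
       ((if h = e mu 1 then 1 + F_map m e y z i else 1) * (if h = e nu 2 then inverse (1 + inverse (F_map m e y z i)) else 1)
        * (if h = e nu 1 then 1 + F_map m e y z i else 1) * (if h = e mu 2 then inverse (1 + inverse (F_map m e y z i)) else 1))"
      using False F' PR unfolding Ax[symmetric] Bx[symmetric] by (simp add: i_def i0 mult_ac)
    also have "\<dots> = shear_flip i (e mu 1) (e nu 2) (e nu 1) (e mu 2) (F_map m e y z) h"
      by (rule flip_alg[where x = "F_map m e y z" and i = i, OF xip False nt])
    finally show ?thesis unfolding kc' e'_def[symmetric] i_def[symmetric] .
  qed
qed

theorem proposition4p4:
  fixes m :: nat and e :: "nat \<Rightarrow> nat \<Rightarrow> nat" and mv :: move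
    and y z :: "nat \<Rightarrow> real"
  assumes "decorated_ideal_triangulation m e"
    and "move_applicable m e mv"
    and "\<forall>mu < 2*m. 0 < y mu \<and> 0 < z mu"
  shows "\<forall>h < 3*m.
           F_map m (move_tri mv e) (fst (kashaev_change mv (y, z))) (snd (kashaev_change mv (y, z))) h
           = shear_change e mv (F_map m e y z) h"
proof (intro allI impI)
  fix h assume h: "h < 3*m"
  show "F_map m (move_tri mv e) (fst (kashaev_change mv (y, z))) (snd (kashaev_change mv (y, z))) h
           = shear_change e mv (F_map m e y z) h"
  proof (cases mv)
    case (Reindex alpha)
    then show ?thesis using reindex_case[of alpha m e y z h] assms(2) by simp
  next
    case (Rotate i)
    then show ?thesis using rotate_case[of i m y z e h] assms(2,3) by simp
  next
    case (Exchange mu nu)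
    then show ?thesis using exchange_case[OF assms(1) _ _ _ _ assms(3) h, of mu nu] assms(2) by simp
  qed
qed

end
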